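(* Let $\Delta\in\mathbb F^{m\times m}$ be a connection matrix with column/row partition $J_0,\dots,J_b$, and let $\widetilde\Delta^0,\dots,\widetilde\Delta^{m-1}$ be produced by the Row Cancellation Algorithm (RCA) applied to $\Delta$. Then: (i) for $r=0,\dots,m-1$, $\widetilde\Delta^r$ is compliant with the allowable sparsity pattern of $\Delta$; (ii) for $r=1,\dots,m-1$, every entry of $\widetilde\Delta^r$ at a primary pivot position of $\widetilde\Delta^r$ is nonzero, and every nonzero entry of $\widetilde\Delta^r$ at a position $(i,j)$ strictly below the $r$-th diagonal either is at a primary pivot position or lies in a column $j$ containing a (unique) primary pivot position $(i',j)$ with $i'>i$; (iii) if $(p-r,p)$ is marked as a primary pivot at iteration $r\le m-2$, then $\widetilde\Delta^s_{p-r,q}=0$ for all $q>p$ and all $s$ with $r+1\le s\le m-1$, and $\widetilde\Delta^s_{p\,\cdot}=0$ (the whole $p$-th row vanishes) for all $s$ with $r+1\le s\le m-1$; (iv) if $(i,j)$ is a primary pivot position of $\widetilde\Delta^{m-1}$, then column $i$ contains no primary pivot position; (v) each row contains at most one primary pivot position of $\widetilde\Delta^{m-1}$.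
   Context: Throughout, $\mathbb F$ is a field and $m\ge1$. $A_{i\cdot}$ is the $i$-th row of $A$. $U^{pq}$ is the $m\times m$ matrix whose only nonzero entry is a $1$ in position $(p,q)$. Superscripts on matrices are indices, not powers. A connection matrix (over $\mathbb F$) is a matrix $\Delta\in\mathbb F^{m\times m}$ together with a partition $\{1,\dots,m\}=J_0\sqcup\cdots\sqcup J_b$ (the column/row partition; the $J_k$ need not consist of consecutive integers) such that $\Delta$ is upper triangular, $\Delta\Delta=0$, and $\Delta_{ij}=0$ unless $i<j$ and $(i,j)\in\bigcup_{k=1}^bJ_{k-1}\times J_k$. This set of positions is the allowable sparsity pattern; a matrix is compliant with it if all its nonzero entries lie in it. For $1\le r\le m-1$ the $r$-th diagonal is $\{(j-r,j):r<j\le m\}$; a position $(i,j)$ is strictly below the $r$-th diagonal if $j-i<r$. Row Cancellation Algorithm (RCA) applied to a connection matrix $\Delta$: set $\widetilde\Delta^0=\widetilde\Delta^1=\Delta$. For $r=1,\dots,m-1$ in turn: (Markup) mark permanently as a primary pivot (marked at iteration $r$) every position $(j-r,j)$ on the $r$-th diagonal with $\widetilde\Delta^r_{j-r,j}\ne0$ such that no position of column $j$ was marked as a primary pivot at an earlier iteration. (Update, only for $r\le m-2$) If no position was marked at iteration $r$, put $\widetilde T^r=I$; otherwise let $j_1<\cdots<j_t$ be the columns of the positions marked at iteration $r$, let $\widetilde T^{r,s}=I-\sum_{q=j_s+1}^m\frac{\widetilde\Delta^r_{j_s-r,q}}{\widetilde\Delta^r_{j_s-r,j_s}}U^{j_sq}$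 and $\widetilde T^r=\widetilde T^{r,1}\cdots\widetilde T^{r,t}$. Set $\widetilde\Delta^{r+1}=(\widetilde T^r)^{-1}\widetilde\Delta^r\widetilde T^r$. The primary pivot positions of $\widetilde\Delta^r$ are the positions marked at iterations $1,\dots,r$. *)

theory Defs
  imports "Jordan_Normal_Form.Matrix"
begin

text \<open>Indices are 0-based: rows/columns of an m x m matrix are 0..m-1.
  The column/row partition J_0,...,J_b is given by a block-label function blk:
  J_k = {i < m. blk i = k}.\<close>

definition allowable :: "nat \<Rightarrow> (nat \<Rightarrow> nat) \<Rightarrow> nat \<Rightarrow> nat \<Rightarrow> bool" where
  "allowable b blk i j \<longleftrightarrow> i < j \<and> (\<exists>k\<in>{1..b}. blk i = k - 1 \<and> blk j = k)"

definition compliant :: "nat \<Rightarrow> (nat \<Rightarrow> nat) \<Rightarrow> 'a::zero mat \<Rightarrow> bool" where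
  "compliant b blk A \<longleftrightarrow>
     (\<forall>i < dim_row A. \<forall>j < dim_col A. A $$ (i,j) \<noteq> 0 \<longrightarrow> allowable b blk i j)"

definition is_partition :: "nat \<Rightarrow> nat \<Rightarrow> (nat \<Rightarrow> nat) \<Rightarrow> bool" where
  "is_partition m b blk \<longleftrightarrow> (\<forall>i<m. blk i \<le> b) \<and> (\<forall>k\<le>b. \<exists>i<m. blk i = k)"

definition connection_matrix :: "nat \<Rightarrow> nat \<Rightarrow> (nat \<Rightarrow> nat) \<Rightarrow> 'a::field mat \<Rightarrow> bool" where
  "connection_matrix m b blk D \<longleftrightarrow>
     D \<in> carrier_mat m m \<and> is_partition m b blk \<and> upper_triangular D \<and>
     D * D = 0\<^sub>m m m \<and> compliant b blk D"

definition matinv :: "nat \<Rightarrow> 'a::field mat \<Rightarrow> 'a mat" where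
  "matinv m A = (THE B. B \<in> carrier_mat m m \<and> A * B = 1\<^sub>m m \<and> B * A = 1\<^sub>m m)"

definition Umat :: "nat \<Rightarrow> nat \<Rightarrow> nat \<Rightarrow> 'a::{zero,one} mat" where
  "Umat m p q = mat m m (\<lambda>(i,k). if i = p \<and> k = q then 1 else 0)"

text \<open>Markup at iteration r: positions (j-r,j) on the r-th diagonal with nonzero entry
  whose column j contains no previously marked primary pivot (P = pivots marked earlier).\<close>
definition rca_markup :: "nat \<Rightarrow> nat \<Rightarrow> 'a::zero mat \<Rightarrow> (nat \<times> nat) set \<Rightarrow> (nat \<times> nat) set" where
  "rca_markup m r D P =
     {(j - r, j) | j. r \<le> j \<and> j < m \<and> D $$ (j - r, j) \<noteq> 0 \<and> (\<forall>i. (i, j) \<notin> P)}"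

text \<open>T^{r,s} for the marked position in column j (row j - r).\<close>
definition rca_Ts :: "nat \<Rightarrow> nat \<Rightarrow> 'a::field mat \<Rightarrow> nat \<Rightarrow> 'a mat" where
  "rca_Ts m r D j =
     foldr (\<lambda>q A. A - (D $$ (j - r, q) / D $$ (j - r, j)) \<cdot>\<^sub>m Umat m j q) [Suc j..<m] (1\<^sub>m m)"

definition rca_T :: "nat \<Rightarrow> nat \<Rightarrow> 'a::field mat \<Rightarrow> (nat \<times> nat) set \<Rightarrow> 'a mat" where
  "rca_T m r D M =
     (if M = {} then 1\<^sub>m m
      else foldr (\<lambda>j A. rca_Ts m r D j * A) (sorted_list_of_set (snd ` M)) (1\<^sub>m m))"

definition rca_update :: "nat \<Rightarrow> nat \<Rightarrow> 'a::field mat \<Rightarrow> (nat \<times> nat) set \<Rightarrow> 'a mat" where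
  "rca_update m r D M = matinv m (rca_T m r D M) * D * rca_T m r D M"

text \<open>rca D r = (tilde Delta^r, primary pivot positions of tilde Delta^r (marked at iterations 1..r),
  positions marked at iteration r).\<close>
fun rca :: "'a::field mat \<Rightarrow> nat \<Rightarrow> 'a mat \<times> (nat \<times> nat) set \<times> (nat \<times> nat) set" where
  "rca D 0 = (D, {}, {})"
| "rca D (Suc r) =
     (let (A, P, M) = rca D r;
          A' = (if r = 0 then A else rca_update (dim_row D) r A M);
          M' = rca_markup (dim_row D) (Suc r) A' P
      in (A', P \<union> M', M'))"

definition rca_mat :: "'a::field mat \<Rightarrow> nat \<Rightarrow> 'a mat" where
  "rca_mat D r = fst (rca D r)"

definition rca_pivots :: "'a::field mat \<Rightarrow> nat \<Rightarrow> (nat \<times> nat) set" where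
  "rca_pivots D r = fst (snd (rca D r))"

definition rca_marked :: "'a::field mat \<Rightarrow> nat \<Rightarrow> (nat \<times> nat) set" where
  "rca_marked D r = snd (snd (rca D r))"

end

theory Submission
  imports Defs "Jordan_Normal_Form.Determinant"
begin


lemma mult_entry:
  assumes "A \<in> carrier_mat m m" "B \<in> carrier_mat m m" "i < m" "j < m"
  shows "(A * B) $$ (i,j) = (\<Sum>k<m. A $$ (i,k) * B $$ (k,j))"
  using assms by (simp add: index_mult_mat scalar_prod_def atLeast0LessThan)

lemma Umat_carrier[simp]: "Umat m p q \<in> carrier_mat m m"
  by (simp add: Umat_def)

lemma Umat_entry: "i < m \<Longrightarrow> k < m \<Longrightarrow> Umat m p q $$ (i,k) = (if i = p \<and> k = q then 1 else 0)"
  by (simp add: Umat_def)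

lemma foldr_U_carrier:
  "foldr (\<lambda>q A. A - (f q :: 'a::field) \<cdot>\<^sub>m Umat m j q) qs (1\<^sub>m m) \<in> carrier_mat m m"
  by (induction qs) (auto intro!: minus_carrier_mat)

lemma foldr_U_entry:
  assumes "distinct qs" "x < m" "y < m"
  shows "foldr (\<lambda>q A. A - (f q :: 'a::field) \<cdot>\<^sub>m Umat m j q) qs (1\<^sub>m m) $$ (x,y)
     = (if x = y then 1 else 0) - (if x = j \<and> y \<in> set qs then f y else 0)"
  using assms
proof (induction qs)
  case Nil then show ?case by simp
next
  case (Cons q qs)
  have c: "foldr (\<lambda>q A. A - (f q :: 'a::field) \<cdot>\<^sub>m Umat m j q) qs (1\<^sub>m m) \<in> carrier_mat m m"
    by (rule foldr_U_carrier)
  have e: "(foldr (\<lambda>q A. A - (f q :: 'a::field) \<cdot>\<^sub>m Umat m j q) qs (1\<^sub>m m) - f q \<cdot>\<^sub>m Umat m j q) $$ (x,y)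
     = foldr (\<lambda>q A. A - (f q :: 'a::field) \<cdot>\<^sub>m Umat m j q) qs (1\<^sub>m m) $$ (x,y) - f q * (if x = j \<and> y = q then 1 else 0)"
    using Cons.prems by (simp add: Umat_def)
  show ?case using Cons c by (auto simp: e)
qed

definition cf :: "nat \<Rightarrow> 'a::field mat \<Rightarrow> nat \<Rightarrow> nat \<Rightarrow> 'a" where
  "cf r D j q = D $$ (j - r, q) / D $$ (j - r, j)"

lemma Ts_carrier[simp]: "rca_Ts m r D j \<in> carrier_mat m m"
  unfolding rca_Ts_def by (rule foldr_U_carrier)

lemma Ts_entry:
  assumes "x < m" "y < m"
  shows "rca_Ts m r D j $$ (x,y) = (if x = y then 1 else 0) - (if x = j \<and> j < y then cf r D j y else 0)"
  unfolding rca_Ts_def using assms by (subst foldr_U_entry) (auto simp: cf_def)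

lemma sum_single:
  assumes "finite S" "i \<in> S" "\<And>k. k \<in> S \<Longrightarrow> k \<noteq> i \<Longrightarrow> f k = 0"
  shows "sum f S = f i"
proof -
  have "sum f S = f i + sum f (S - {i})" using assms by (simp add: sum.remove)
  also have "sum f (S - {i}) = 0" using assms by (intro sum.neutral) auto
  finally show ?thesis by simp
qed

lemma right_Ts:
  assumes "B \<in> carrier_mat m m" "i < m" "q < m" "j < m"
  shows "(B * rca_Ts m r D j) $$ (i,q) = B $$ (i,q) - (if j < q then B $$ (i,j) * cf r D j q else 0)"
proof -
  have "(B * rca_Ts m r D j) $$ (i,q) = (\<Sum>k<m. B $$ (i,k) * rca_Ts m r D j $$ (k,q))"
    using assms by (simp add: mult_entry)
  also have "\<dots> = (\<Sum>k<m. B $$ (i,k) * (if k = q then 1 else 0) - (if k = j \<and> j < q then B $$ (i,k) * cf r D j q else 0))"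
    using assms by (intro sum.cong) (auto simp: Ts_entry algebra_simps)
  also have "\<dots> = (\<Sum>k<m. B $$ (i,k) * (if k = q then 1 else 0)) - (\<Sum>k<m. (if k = j \<and> j < q then B $$ (i,k) * cf r D j q else 0))"
    by (simp add: sum_subtractf)
  also have "(\<Sum>k<m. B $$ (i,k) * (if k = q then 1 else 0)) = B $$ (i,q)"
    using assms by (subst sum_single[of _ q]) auto
  also have "(\<Sum>k<m. (if k = j \<and> j < q then B $$ (i,k) * cf r D j q else 0)) = (if j < q then B $$ (i,j) * cf r D j q else 0)"
    using assms by (subst sum_single[of _ j]) auto
  finally show ?thesis .
qed

lemma left_Ts_other:
  assumes "B \<in> carrier_mat m m" "i < m" "q < m" "i \<noteq> j"
  shows "(rca_Ts m r D j * B) $$ (i,q) = B $$ (i,q)"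
proof -
  have "(rca_Ts m r D j * B) $$ (i,q) = (\<Sum>k<m. rca_Ts m r D j $$ (i,k) * B $$ (k,q))"
    using assms by (simp add: mult_entry)
  also have "\<dots> = (\<Sum>k<m. (if k = i then B $$ (k,q) else 0))"
    using assms by (intro sum.cong) (auto simp: Ts_entry)
  also have "\<dots> = B $$ (i,q)" using assms by (subst sum_single[of _ i]) auto
  finally show ?thesis .
qed

lemma left_Ts_lower:
  assumes "B \<in> carrier_mat m m" "x < m" "y < m" "y \<le> x" "\<And>a c. a < m \<Longrightarrow> c < a \<Longrightarrow> B $$ (a,c) = 0"
  shows "(rca_Ts m r D j * B) $$ (x,y) = B $$ (x,y)"
proof -
  have "(rca_Ts m r D j * B) $$ (x,y) = (\<Sum>k<m. rca_Ts m r D j $$ (x,k) * B $$ (k,y))"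
    using assms by (simp add: mult_entry)
  also have "\<dots> = (\<Sum>k<m. (if k = x then B $$ (k,y) else 0))"
    using assms by (intro sum.cong) (auto simp: Ts_entry)
  also have "\<dots> = B $$ (x,y)" using assms by (subst sum_single[of _ x]) auto
  finally show ?thesis .
qed



abbreviation TT :: "nat \<Rightarrow> nat \<Rightarrow> 'a::field mat \<Rightarrow> nat list \<Rightarrow> 'a mat" where
  "TT m r D js \<equiv> foldr (\<lambda>j A. rca_Ts m r D j * A) js (1\<^sub>m m)"

lemma TT_carrier[simp]: "TT m r D js \<in> carrier_mat m m"
proof (induction js)
  case Nil then show ?case by simp
next
  case (Cons j js)
  then show ?case using mult_carrier_mat[OF Ts_carrier Cons] by simp
qed

lemma TT_dims[simp]: "dim_row (TT m r D js) = m" "dim_col (TT m r D js) = m"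
  using carrier_matD[OF TT_carrier[of m r D js]] by auto

lemma TT_row_other:
  assumes "i \<notin> set js" "i < m" "q < m"
  shows "TT m r D js $$ (i,q) = (if i = q then 1 else 0)"
  using assms
proof (induction js)
  case Nil then show ?case by simp
next
  case (Cons j js)
  have "(rca_Ts m r D j * TT m r D js) $$ (i,q) = TT m r D js $$ (i,q)"
    by (rule left_Ts_other[OF TT_carrier]) (use Cons.prems in auto)
  then show ?case using Cons by simp
qed

lemma TT_lower:
  assumes "x < m" "y < m" "y \<le> x"
  shows "TT m r D js $$ (x,y) = (if x = y then 1 else 0)"
  using assms
proof (induction js arbitrary: x y)
  case Nil then show ?case by simp
next
  case (Cons j js)
  have "(rca_Ts m r D j * TT m r D js) $$ (x,y) = TT m r D js $$ (x,y)"
    by (rule left_Ts_lower[OF TT_carrier]) (use Cons.prems Cons.IH in auto)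
  then show ?case using Cons by simp
qed

lemma TT_upper: "upper_triangular (TT m r D js)"
  unfolding upper_triangular_def
proof (intro allI impI)
  fix i j assume "i < dim_row (TT m r D js)" "j < i"
  then have "i < m" "j < m" "j \<le> i" "i \<noteq> j" by auto
  then show "TT m r D js $$ (i,j) = 0" using TT_lower[of i m j r D js] by simp
qed

lemma TT_det: "det (TT m r D js) = 1"
proof -
  have "det (TT m r D js) = prod_list (diag_mat (TT m r D js))"
    by (rule det_upper_triangular[OF TT_upper TT_carrier])
  also have "diag_mat (TT m r D js) = map (\<lambda>i. 1) [0..<m]"
    unfolding diag_mat_def TT_dims
  proof (rule map_cong)
    fix i assume "i \<in> set [0..<m]"
    then have "i < m" by simp
    then show "TT m r D js $$ (i,i) = 1" using TT_lower[of i m i r D js] by simp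
  qed simp
  also have "prod_list (map (\<lambda>i. 1::'a) [0..<m]) = 1" by (induction m) auto
  finally show ?thesis .
qed

lemma inverse_unique:
  assumes "(T::'a::field mat) \<in> carrier_mat m m" "B \<in> carrier_mat m m" "C \<in> carrier_mat m m"
    "T * B = 1\<^sub>m m" "B * T = 1\<^sub>m m" "T * C = 1\<^sub>m m" "C * T = 1\<^sub>m m"
  shows "B = C"
proof -
  have "B = B * 1\<^sub>m m" using assms(2) by simp
  also have "\<dots> = B * (T * C)" using assms(6) by simp
  also have "\<dots> = (B * T) * C" using assms(1-3) by (simp add: assoc_mult_mat)
  also have "\<dots> = C" using assms(3,5) by simp
  finally show ?thesis .
qed

lemma matinv_TT:
  shows "matinv m (TT m r D js) \<in> carrier_mat m m \<and> TT m r D js * matinv m (TT m r D js) = 1\<^sub>m m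
     \<and> matinv m (TT m r D js) * TT m r D js = 1\<^sub>m m"
proof -
  let ?T = "TT m r D js"
  have "?T \<in> Units (ring_mat TYPE('a) m undefined)"
    by (rule det_non_zero_imp_unit) (auto simp: TT_det)
  then obtain B where B: "B \<in> carrier_mat m m" "?T * B = 1\<^sub>m m" "B * ?T = 1\<^sub>m m"
    unfolding Units_def ring_mat_def by auto
  have "matinv m ?T = B"
    unfolding matinv_def
  proof (rule the_equality)
    show "B \<in> carrier_mat m m \<and> ?T * B = 1\<^sub>m m \<and> B * ?T = 1\<^sub>m m" using B by simp
  next
    fix C assume "C \<in> carrier_mat m m \<and> ?T * C = 1\<^sub>m m \<and> C * ?T = 1\<^sub>m m"
    then show "C = B" using inverse_unique[OF TT_carrier _ B(1), of C] B by blast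
  qed
  with B show ?thesis by simp
qed

lemma rca_T_eq: "finite M \<Longrightarrow> rca_T m r D M = TT m r D (sorted_list_of_set (snd ` M))"
  unfolding rca_T_def by auto

lemma mult_TT_Cons:
  assumes "B \<in> carrier_mat m m"
  shows "B * TT m r D (j # js) = (B * rca_Ts m r D j) * TT m r D js"
  using assms by (simp add: assoc_mult_mat[symmetric, of B m m _ m _ m])

lemma F2:
  assumes "B \<in> carrier_mat m m" "i < m" "q < m" "q \<le> L" "\<forall>j\<in>set js. j < m"
    "\<forall>j\<in>set js. j < L \<longrightarrow> B $$ (i,j) = 0"
  shows "(B * TT m r D js) $$ (i,q) = B $$ (i,q)"
  using assms
proof (induction js arbitrary: B q)
  case Nil then show ?case by simp
next
  case (Cons j js)
  let ?B' = "B * rca_Ts m r D j"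
  have B': "?B' \<in> carrier_mat m m" using Cons by auto
  have eq: "?B' $$ (i,q') = B $$ (i,q')" if "q' < m" "q' \<le> L" for q'
    using Cons that by (auto simp: right_Ts)
  have "(B * TT m r D (j # js)) $$ (i,q) = (?B' * TT m r D js) $$ (i,q)"
    using mult_TT_Cons[OF Cons.prems(1), of r D j js] by (rule arg_cong)
  also have "\<dots> = ?B' $$ (i,q)"
    using Cons(1)[OF B'] Cons.prems eq by auto
  also have "\<dots> = B $$ (i,q)" using eq Cons by auto
  finally show ?case .
qed

lemma F1:
  assumes "B \<in> carrier_mat m m" "i < m" "q < m" "\<forall>j\<in>set js. j < m"
    "\<forall>j\<in>set js. B $$ (i,j) = 0"
  shows "(B * TT m r D js) $$ (i,q) = B $$ (i,q)"
  using F2[of B m i q m js r D] assms by auto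

lemma F3:
  assumes "B \<in> carrier_mat m m" "compliant b blk B" "\<forall>j\<in>set js. j < m"
    "\<forall>j\<in>set js. \<forall>q<m. j < q \<and> D $$ (j - r, q) \<noteq> 0 \<longrightarrow> (\<forall>i. allowable b blk i j \<longrightarrow> allowable b blk i q)"
  shows "compliant b blk (B * TT m r D js)"
  using assms
proof (induction js arbitrary: B)
  case Nil then show ?case by simp
next
  case (Cons j js)
  let ?B' = "B * rca_Ts m r D j"
  have B': "?B' \<in> carrier_mat m m" using Cons by auto
  have "compliant b blk ?B'"
    unfolding compliant_def
  proof (intro allI impI)
    fix i q assume iq: "i < dim_row ?B'" "q < dim_col ?B'" "?B' $$ (i,q) \<noteq> 0"
    then have i: "i < m" and q: "q < m" using B' by auto
    have e: "?B' $$ (i,q) = B $$ (i,q) - (if j < q then B $$ (i,j) * cf r D j q else 0)"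
      using Cons.prems i q by (auto simp: right_Ts)
    show "allowable b blk i q"
    proof (cases "B $$ (i,q) \<noteq> 0")
      case True then show ?thesis using Cons.prems(1,2) i q by (auto simp: compliant_def)
    next
      case False
      then have "j < q" "B $$ (i,j) \<noteq> 0" "cf r D j q \<noteq> 0" using e iq(3) by (auto split: if_splits)
      then have "allowable b blk i j" "D $$ (j - r, q) \<noteq> 0"
        using Cons.prems(1,2,3) i by (auto simp: compliant_def cf_def)
      then show ?thesis using Cons.prems(4) \<open>j < q\<close> q by auto
    qed
  qed
  then have "compliant b blk (?B' * TT m r D js)" using Cons B' by simp
  then show ?case using mult_TT_Cons[OF Cons.prems(1), of r D j js] by simp
qed

lemma TT_append:
  assumes "B \<in> carrier_mat m m"
  shows "B * TT m r D (xs @ ys) = (B * TT m r D xs) * TT m r D ys"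
  using assms
proof (induction xs arbitrary: B)
  case Nil then show ?case by simp
next
  case (Cons x xs)
  have B': "B * rca_Ts m r D x \<in> carrier_mat m m" using Cons by auto
  have "B * TT m r D ((x # xs) @ ys) = (B * rca_Ts m r D x) * TT m r D (xs @ ys)"
    using mult_TT_Cons[OF Cons.prems(1), of r D x "xs @ ys"] by simp
  also have "\<dots> = ((B * rca_Ts m r D x) * TT m r D xs) * TT m r D ys" using Cons B' by simp
  also have "(B * rca_Ts m r D x) * TT m r D xs = B * TT m r D (x # xs)"
    using mult_TT_Cons[OF Cons.prems(1), of r D x xs] by simp
  finally show ?case .
qed




lemma F4:
  assumes A: "A \<in> carrier_mat m m" and s: "sorted_wrt (<) js" and j0: "j0 \<in> set js"
    and lt: "\<forall>j\<in>set js. j < m" and i: "i = j0 - r" and nz: "A $$ (i,j0) \<noteq> 0"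
    and z: "\<forall>j\<in>set js. j < j0 \<longrightarrow> A $$ (i,j) = 0" and q: "q < m"
  shows "(A * TT m r A js) $$ (i,q) = (if j0 < q then 0 else A $$ (i,q))"
proof -
  obtain xs ys where js: "js = xs @ j0 # ys" using split_list[OF j0] by blast
  have xs: "\<forall>x\<in>set xs. x < j0" and ys: "\<forall>y\<in>set ys. j0 < y"
    using s unfolding js by (auto simp: sorted_wrt_append)
  have j0m: "j0 < m" using lt j0 by auto
  have im: "i < m" using i j0m by simp
  let ?B1 = "A * TT m r A xs"
  let ?B2 = "?B1 * rca_Ts m r A j0"
  have B1: "?B1 \<in> carrier_mat m m" using A by simp
  have B2: "?B2 \<in> carrier_mat m m" using B1 by simp
  have e1: "?B1 $$ (i,q') = A $$ (i,q')" if "q' < m" for q'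
    by (rule F1[OF A im that]) (use lt z xs js in auto)
  have e2: "?B2 $$ (i,q') = (if j0 < q' then 0 else A $$ (i,q'))" if "q' < m" for q'
  proof -
    have "?B2 $$ (i,q') = ?B1 $$ (i,q') - (if j0 < q' then ?B1 $$ (i,j0) * cf r A j0 q' else 0)"
      by (rule right_Ts[OF B1 im that j0m])
    also have "\<dots> = A $$ (i,q') - (if j0 < q' then A $$ (i,j0) * cf r A j0 q' else 0)"
      using e1 that j0m by simp
    also have "\<dots> = (if j0 < q' then 0 else A $$ (i,q'))"
      using nz i by (auto simp: cf_def)
    finally show ?thesis .
  qed
  have "A * TT m r A js = ?B1 * TT m r A (j0 # ys)"
    unfolding js by (rule TT_append[OF A])
  also have "\<dots> = ?B2 * TT m r A ys" by (rule mult_TT_Cons[OF B1])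
  finally have "(A * TT m r A js) $$ (i,q) = (?B2 * TT m r A ys) $$ (i,q)" by simp
  also have "\<dots> = ?B2 $$ (i,q)"
    by (rule F1[OF B2 im q]) (use lt js ys e2 in auto)
  finally show ?thesis using e2 q by simp
qed




definition Inv :: "nat \<Rightarrow> nat \<Rightarrow> (nat \<Rightarrow> nat) \<Rightarrow> nat \<Rightarrow> 'a::field mat \<Rightarrow> (nat \<times> nat) set \<Rightarrow> bool" where
 "Inv m b blk n A P \<longleftrightarrow> A \<in> carrier_mat m m \<and> compliant b blk A \<and> A * A = 0\<^sub>m m m \<and>
   (\<forall>i j. (i,j) \<in> P \<longrightarrow> i < j \<and> j < i + n \<and> j < m) \<and>
   (\<forall>i i' j. (i,j) \<in> P \<longrightarrow> (i',j) \<in> P \<longrightarrow> i = i') \<and>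
   (\<forall>i j j'. (i,j) \<in> P \<longrightarrow> (i,j') \<in> P \<longrightarrow> j = j') \<and>
   (\<forall>i j i'. (i,j) \<in> P \<longrightarrow> (i',i) \<notin> P) \<and>
   (\<forall>i j. (i,j) \<in> P \<longrightarrow> A $$ (i,j) \<noteq> 0 \<and> (\<forall>q. j < q \<and> q < m \<longrightarrow> A $$ (i,q) = 0) \<and> (\<forall>q<m. A $$ (j,q) = 0)) \<and>
   (\<forall>i j. i < m \<longrightarrow> j < m \<longrightarrow> j < i + n \<longrightarrow> A $$ (i,j) \<noteq> 0 \<longrightarrow> (\<exists>i'. i \<le> i' \<and> (i',j) \<in> P))"

lemma allow_trans:
  assumes "allowable b blk a j" "allowable b blk a q" "allowable b blk i j" "j < q"
  shows "allowable b blk i q"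
proof -
  from assms(1) obtain k1 where "blk a = k1 - 1" "blk j = k1" "k1 \<ge> 1" unfolding allowable_def by auto
  moreover from assms(2) obtain k2 where "blk a = k2 - 1" "blk q = k2" "k2 \<ge> 1" "k2 \<le> b" unfolding allowable_def by auto
  moreover from assms(3) obtain k3 where "blk i = k3 - 1" "blk j = k3" "i < j" unfolding allowable_def by auto
  ultimately have "blk q = k3" "blk i = k3 - 1" "k3 \<in> {1..b}" "i < q" using assms(4) by auto
  then show ?thesis unfolding allowable_def by blast
qed

lemma AA_entry:
  assumes "A \<in> carrier_mat m m" "A * A = 0\<^sub>m m m" "i < m" "j < m"
  shows "(\<Sum>k<m. A $$ (i,k) * A $$ (k,j)) = 0"
proof -
  have "(A * A) $$ (i,j) = 0" using assms by simp
  then show ?thesis using mult_entry[OF assms(1,1,3,4)] by simp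
qed

context
  fixes m b :: nat and blk :: "nat \<Rightarrow> nat" and n :: nat and A :: "'a::field mat" and P
  assumes inv: "Inv m b blk n A P" and n1: "1 \<le> n"
begin

lemma Ac: "A \<in> carrier_mat m m" using inv by (simp add: Inv_def)
lemma Acomp: "compliant b blk A" using inv by (simp add: Inv_def)
lemma AA: "A * A = 0\<^sub>m m m" using inv by (simp add: Inv_def)
lemma P0: "(i,j) \<in> P \<Longrightarrow> i < j \<and> j < i + n \<and> j < m" using inv by (simp add: Inv_def)
lemma PU: "(i,j) \<in> P \<Longrightarrow> (i',j) \<in> P \<Longrightarrow> i = i'" using inv unfolding Inv_def by blast
lemma PR: "(i,j) \<in> P \<Longrightarrow> (i,j') \<in> P \<Longrightarrow> j = j'" using inv unfolding Inv_def by blast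
lemma PIV: "(i,j) \<in> P \<Longrightarrow> (i',i) \<notin> P" using inv unfolding Inv_def by blast
lemma PB1: "(i,j) \<in> P \<Longrightarrow> A $$ (i,j) \<noteq> 0" using inv unfolding Inv_def by blast
lemma PB2: "(i,j) \<in> P \<Longrightarrow> j < q \<Longrightarrow> q < m \<Longrightarrow> A $$ (i,q) = 0" using inv unfolding Inv_def by blast
lemma PB3: "(i,j) \<in> P \<Longrightarrow> q < m \<Longrightarrow> A $$ (j,q) = 0" using inv unfolding Inv_def by blast
lemma PC: "i < m \<Longrightarrow> j < m \<Longrightarrow> j < i + n \<Longrightarrow> A $$ (i,j) \<noteq> 0 \<Longrightarrow> \<exists>i'. i \<le> i' \<and> (i',j) \<in> P"
  using inv unfolding Inv_def by blast

abbreviation "MM \<equiv> rca_markup m n A P"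
abbreviation "JJ \<equiv> snd ` MM"
abbreviation "js \<equiv> sorted_list_of_set JJ"
abbreviation "T \<equiv> TT m n A js"
abbreviation "Ti \<equiv> matinv m T"
abbreviation "AT \<equiv> A * T"
abbreviation "A' \<equiv> rca_update m n A MM"

lemma memM: "(i,j) \<in> MM \<longleftrightarrow> n \<le> j \<and> j < m \<and> i = j - n \<and> A $$ (j - n, j) \<noteq> 0 \<and> (\<forall>i. (i,j) \<notin> P)"
  unfolding rca_markup_def by auto

lemma memJ: "j \<in> JJ \<longleftrightarrow> n \<le> j \<and> j < m \<and> A $$ (j - n, j) \<noteq> 0 \<and> (\<forall>i. (i,j) \<notin> P)"
proof
  assume "j \<in> JJ"
  then obtain x where "x \<in> MM" "j = snd x" by blast
  then show "n \<le> j \<and> j < m \<and> A $$ (j - n, j) \<noteq> 0 \<and> (\<forall>i. (i,j) \<notin> P)"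
    using memM[of "fst x" "snd x"] by simp
next
  assume "n \<le> j \<and> j < m \<and> A $$ (j - n, j) \<noteq> 0 \<and> (\<forall>i. (i,j) \<notin> P)"
  then have "(j - n, j) \<in> MM" using memM by simp
  then show "j \<in> JJ" by (rule rev_image_eqI) simp
qed

lemma finM: "finite MM"
proof -
  have "MM \<subseteq> (\<lambda>j. (j - n, j)) ` {..<m}" using memM by auto
  then show ?thesis by (rule finite_subset) simp
qed

lemma set_js: "set js = JJ" using finM by simp
lemma sorted_js: "sorted_wrt (<) js" by (simp add: strict_sorted_list_of_set)
lemma js_lt: "\<forall>j\<in>set js. j < m" using set_js memJ by auto

lemma T_eq: "rca_T m n A MM = T" using rca_T_eq[OF finM] .

lemma A'_eq: "A' = Ti * AT"
proof -
  have "A' = Ti * A * T" unfolding rca_update_def T_eq ..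
  also have "\<dots> = Ti * AT" using matinv_TT[of m n A js] Ac by (simp add: assoc_mult_mat[of _ m m _ m _ m])
  finally show ?thesis .
qed

lemma Ti_c: "Ti \<in> carrier_mat m m" and T_Ti: "T * Ti = 1\<^sub>m m" and Ti_T: "Ti * T = 1\<^sub>m m"
  using matinv_TT[of m n A js] by auto

lemma AT_c: "AT \<in> carrier_mat m m" using Ac by simp
lemma A'_c: "A' \<in> carrier_mat m m" unfolding A'_eq using Ti_c AT_c by simp

lemma Ti_row: assumes "x \<notin> JJ" "x < m" "y < m" shows "Ti $$ (x,y) = (if x = y then 1 else 0)"
proof -
  have "(if x = y then 1 else 0) = (T * Ti) $$ (x,y)" using T_Ti assms by simp
  also have "\<dots> = (\<Sum>k<m. T $$ (x,k) * Ti $$ (k,y))" by (rule mult_entry[OF TT_carrier Ti_c assms(2,3)])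
  also have "\<dots> = (\<Sum>k<m. if k = x then Ti $$ (k,y) else 0)"
    using assms set_js by (intro sum.cong) (auto simp: TT_row_other)
  also have "\<dots> = Ti $$ (x,y)" using assms by (subst sum_single[of _ x]) auto
  finally show ?thesis by simp
qed

lemma A'_row: assumes "x \<notin> JJ" "x < m" "y < m" shows "A' $$ (x,y) = AT $$ (x,y)"
proof -
  have "A' $$ (x,y) = (\<Sum>k<m. Ti $$ (x,k) * AT $$ (k,y))"
    unfolding A'_eq by (rule mult_entry[OF Ti_c AT_c assms(2,3)])
  also have "\<dots> = (\<Sum>k<m. if k = x then AT $$ (k,y) else 0)"
    using assms by (intro sum.cong) (auto simp: Ti_row)
  also have "\<dots> = AT $$ (x,y)" using assms by (subst sum_single[of _ x]) auto
  finally show ?thesis .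
qed

lemma A'A': "A' * A' = 0\<^sub>m m m"
proof -
  have Tc: "T \<in> carrier_mat m m" by simp
  have "A' * A' = Ti * (AT * (Ti * AT))" unfolding A'_eq
    using Ti_c AT_c by (simp add: assoc_mult_mat[of _ m m _ m _ m])
  also have "AT * (Ti * AT) = A * ((T * Ti) * AT)"
    using Ti_c AT_c Ac Tc by (simp add: assoc_mult_mat[of _ m m _ m _ m])
  also have "\<dots> = (A * A) * T" using Ac Tc T_Ti by (simp add: assoc_mult_mat[of _ m m _ m _ m])
  also have "\<dots> = 0\<^sub>m m m" using AA Tc by simp
  finally show ?thesis using Ti_c by simp
qed


lemma Am: "dim_row A = m" "dim_col A = m" using Ac by auto

lemma K1: assumes "j \<in> JJ" "i < m" "j < i + n" shows "A $$ (i,j) = 0"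
proof (rule ccontr)
  assume "A $$ (i,j) \<noteq> 0"
  then obtain i' where "(i',j) \<in> P" using PC[of i j] assms memJ by auto
  then show False using assms(1) memJ by auto
qed

lemma AT_pref: assumes "i < m" "q < m" "q \<le> i + n" shows "AT $$ (i,q) = A $$ (i,q)"
  by (rule F2[where L="i+n", OF Ac assms js_lt]) (use K1 set_js assms in auto)

lemma AT_Prow: assumes "(p',p) \<in> P" "q < m" shows "AT $$ (p,q) = 0"
proof -
  have pm: "p < m" using P0[OF assms(1)] by simp
  have "AT $$ (p,q) = A $$ (p,q)"
    by (rule F1[OF Ac pm assms(2) js_lt]) (use js_lt PB3[OF assms(1)] in auto)
  then show ?thesis using PB3[OF assms] by simp
qed

lemma Z: assumes iJ: "i \<in> JJ" and ij: "(i,j) \<in> P \<or> (i,j) \<in> MM" shows False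
proof -
  from iJ have ni: "n \<le> i" "i < m" "A $$ (i - n, i) \<noteq> 0" unfolding memJ by auto
  define i0 where "i0 = i - n"
  have i0: "i = i0 + n" "i0 < m" using ni unfolding i0_def by auto
  have facts: "A $$ (i,j) \<noteq> 0 \<and> j < m \<and> j \<le> i + n \<and> (\<forall>i''. (i'',j) \<in> P \<longrightarrow> i'' \<le> i)"
  proof (cases "(i,j) \<in> P")
    case True
    have "\<forall>i''. (i'',j) \<in> P \<longrightarrow> i'' \<le> i"
    proof (intro allI impI)
      fix i'' assume "(i'',j) \<in> P" then have "i = i''" by (rule PU[OF True])
      then show "i'' \<le> i" by simp
    qed
    moreover have "A $$ (i,j) \<noteq> 0" by (rule PB1[OF True])
    moreover have "j < m \<and> j \<le> i + n" using P0[OF True] by simp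
    ultimately show ?thesis by simp
  next
    case False
    then have h: "(i,j) \<in> MM" using ij by simp
    then have "n \<le> j" "j < m" "i = j - n" "A $$ (j - n, j) \<noteq> 0" "\<forall>i. (i,j) \<notin> P"
      unfolding memM by auto
    then show ?thesis by simp
  qed
  then have Aij: "A $$ (i,j) \<noteq> 0" and jm: "j < m" and jle: "j \<le> i + n"
    and colj: "\<And>i''. (i'',j) \<in> P \<Longrightarrow> i'' \<le> i" by auto
  have "(\<Sum>k<m. A $$ (i0,k) * A $$ (k,j)) = A $$ (i0,i) * A $$ (i,j)"
  proof (rule sum_single)
    show "finite {..<m}" by simp
    show "i \<in> {..<m}" using ni by simp
    fix k assume k: "k \<in> {..<m}" "k \<noteq> i"
    then have km: "k < m" by simp
    show "A $$ (i0,k) * A $$ (k,j) = 0"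
    proof (cases "k < i")
      case True
      show ?thesis
      proof (cases "A $$ (i0,k) = 0")
        case False
        have "k < i0 + n" using True i0 by simp
        then obtain i'' where "(i'',k) \<in> P" using PC[OF i0(2) km _ False] by blast
        then have "A $$ (k,j) = 0" using PB3 jm by blast
        then show ?thesis by simp
      qed simp
    next
      case False
      then have ki: "i < k" using k by simp
      show ?thesis
      proof (cases "A $$ (k,j) = 0")
        case False
        have "j < k + n" using jle ki by simp
        then obtain i'' where h: "k \<le> i''" "(i'',j) \<in> P" using PC[OF km jm _ False] by blast
        have "i'' \<le> i" by (rule colj[OF h(2)])
        then have False using h(1) ki by simp
        then show ?thesis by simp
      qed simp
    qed
  qed
  then have "A $$ (i0,i) * A $$ (i,j) = 0" using AA_entry[OF Ac AA i0(2) jm] by simp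
  moreover have "A $$ (i0,i) \<noteq> 0" using ni(3) i0_def by simp
  ultimately show False using Aij by simp
qed

lemma P_col_notJ: "(i,j) \<in> P \<Longrightarrow> j \<notin> JJ" using memJ by blast

lemma A'_Prow: assumes "(p',p) \<in> P" "q < m" shows "A' $$ (p,q) = 0"
proof -
  have "p < m" using P0[OF assms(1)] by simp
  then show ?thesis using A'_row[OF P_col_notJ[OF assms(1)] _ assms(2)] AT_Prow[OF assms] by simp
qed

lemma A'_Pleft: assumes "(p',p) \<in> P" "q < m" shows "A' $$ (p',q) = A $$ (p',q)"
proof -
  have pm: "p' < m" "p < m" "p < p' + n" using P0[OF assms(1)] by auto
  have nJ: "p' \<notin> JJ" using Z assms(1) by blast
  have "AT $$ (p',q) = A $$ (p',q)"
  proof (rule F1[OF Ac pm(1) assms(2) js_lt], intro ballI)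
    fix j assume "j \<in> set js"
    then have jJ: "j \<in> JJ" using set_js by simp
    then have jm: "j < m" using memJ by simp
    show "A $$ (p',j) = 0"
    proof (cases "p < j")
      case True show ?thesis using PB2[OF assms(1) True jm] by simp
    next
      case False
      moreover have "j \<noteq> p" using jJ P_col_notJ[OF assms(1)] by auto
      ultimately have "j < p' + n" using pm by simp
      then show ?thesis using K1[OF jJ pm(1)] by simp
    qed
  qed
  then show ?thesis using A'_row[OF nJ pm(1) assms(2)] by simp
qed

lemma A'_Mrow: assumes "(i,j) \<in> MM" "q < m" shows "A' $$ (i,q) = (if j < q then 0 else A $$ (i,q))"
proof -
  have h: "n \<le> j" "j < m" "i = j - n" "A $$ (j - n, j) \<noteq> 0" using memM assms(1) by auto
  have nJ: "i \<notin> JJ" using Z assms(1) by blast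
  have im: "i < m" using h by simp
  have jJ: "j \<in> set js" using assms(1) set_js by force
  have "AT $$ (i,q) = (if j < q then 0 else A $$ (i,q))"
    by (rule F4[OF Ac sorted_js jJ js_lt h(3)]) (use h K1 set_js im assms(2) in auto)
  then show ?thesis using A'_row[OF nJ im assms(2)] by simp
qed

lemma A'_Jrow: assumes jJ: "j \<in> JJ" and x: "x < m" shows "A' $$ (j,x) = 0"
proof -
  have h: "n \<le> j" "j < m" "A $$ (j - n, j) \<noteq> 0" "\<forall>i. (i,j) \<notin> P" using memJ jJ by auto
  define i where "i = j - n"
  have ijM: "(i,j) \<in> MM" using memM h i_def by simp
  have im: "i < m" and ji: "j = i + n" using h i_def by auto
  have A'c: "A' \<in> carrier_mat m m" by (rule A'_c)
  have "(\<Sum>k<m. A' $$ (i,k) * A' $$ (k,x)) = A' $$ (i,j) * A' $$ (j,x)"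
  proof (rule sum_single)
    show "finite {..<m}" by simp
    show "j \<in> {..<m}" using h by simp
    fix k assume k: "k \<in> {..<m}" "k \<noteq> j"
    show "A' $$ (i,k) * A' $$ (k,x) = 0"
    proof (cases "j < k")
      case True then show ?thesis using A'_Mrow[OF ijM] k by simp
    next
      case False
      then have kj: "k < j" using k by simp
      show ?thesis
      proof (cases "A' $$ (i,k) = 0")
        case False
        then have "A $$ (i,k) \<noteq> 0" using A'_Mrow[OF ijM, of k] k kj by simp
        then obtain i'' where "(i'',k) \<in> P" using PC[of i k] im k kj ji by auto
        then show ?thesis using A'_Prow x by simp
      qed simp
    qed
  qed
  then have "A' $$ (i,j) * A' $$ (j,x) = 0" using AA_entry[OF A'c A'A' im x] by simp
  moreover have "A' $$ (i,j) \<noteq> 0" using A'_Mrow[OF ijM] h i_def by simp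
  ultimately show ?thesis by simp
qed

lemma AT_comp: "compliant b blk AT"
proof (rule F3[OF Ac Acomp js_lt], intro ballI allI impI)
  fix j q i assume jJ': "j \<in> set js" and q: "q < m" and jq: "j < q \<and> A $$ (j - n, q) \<noteq> 0"
    and ij: "allowable b blk i j"
  have jJ: "j \<in> JJ" using jJ' set_js by simp
  have h: "j < m" "A $$ (j - n, j) \<noteq> 0" using memJ jJ by auto
  have a1: "allowable b blk (j - n) j" using Acomp h Am unfolding compliant_def by auto
  have a2: "allowable b blk (j - n) q" using Acomp h Am jq q unfolding compliant_def by auto
  show "allowable b blk i q" by (rule allow_trans[OF a1 a2 ij]) (use jq in simp)
qed

lemma inJ: "(i,j) \<in> MM \<Longrightarrow> j \<in> JJ"
  by (rule image_eqI[where x="(i,j)"]) simp_all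

lemma MMD: assumes "(i,j) \<in> MM" shows "n \<le> j \<and> j < m \<and> i = j - n \<and> A $$ (i,j) \<noteq> 0 \<and> (\<forall>i. (i,j) \<notin> P)"
proof -
  have "n \<le> j \<and> j < m \<and> i = j - n \<and> A $$ (j - n, j) \<noteq> 0 \<and> (\<forall>i. (i,j) \<notin> P)"
    using assms unfolding memM .
  then show ?thesis by simp
qed

lemma MMI: assumes "n \<le> j" "j < m" "A $$ (j - n, j) \<noteq> 0" "\<forall>i. (i,j) \<notin> P" shows "(j - n, j) \<in> MM"
  unfolding memM using assms by simp

lemma step: "Inv m b blk (Suc n) A' (P \<union> MM)"
proof -
  have A'm: "dim_row A' = m" "dim_col A' = m" using A'_c by auto
  have comp: "compliant b blk A'"
    unfolding compliant_def A'm
  proof (intro allI impI)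
    fix i j assume ij: "i < m" "j < m" "A' $$ (i,j) \<noteq> 0"
    have nJ: "i \<notin> JJ"
    proof
      assume "i \<in> JJ" then have "A' $$ (i,j) = 0" using A'_Jrow ij(2) by blast
      then show False using ij(3) by simp
    qed
    have "AT $$ (i,j) \<noteq> 0" using A'_row[OF nJ ij(1,2)] ij(3) by simp
    moreover have "dim_row AT = m" "dim_col AT = m" using AT_c by auto
    ultimately show "allowable b blk i j" using AT_comp ij unfolding compliant_def by simp
  qed
  have p0: "\<forall>i j. (i,j) \<in> P \<union> MM \<longrightarrow> i < j \<and> j < i + Suc n \<and> j < m"
  proof (intro allI impI)
    fix i j assume "(i,j) \<in> P \<union> MM"
    then consider "(i,j) \<in> P" | "(i,j) \<in> MM" by blast
    then show "i < j \<and> j < i + Suc n \<and> j < m"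
    proof cases
      case 1 then show ?thesis using P0[OF 1] by simp
    next
      case 2 then show ?thesis using MMD[OF 2] n1 by simp
    qed
  qed
  have pu: "\<forall>i i' j. (i,j) \<in> P \<union> MM \<longrightarrow> (i',j) \<in> P \<union> MM \<longrightarrow> i = i'"
  proof (intro allI impI)
    fix i i' j assume a: "(i,j) \<in> P \<union> MM" "(i',j) \<in> P \<union> MM"
    show "i = i'"
    proof (cases "(i,j) \<in> P")
      case True
      then have "(i',j) \<notin> MM" using MMD by blast
      then have "(i',j) \<in> P" using a by simp
      then show ?thesis using PU[OF True] by simp
    next
      case False
      then have M: "(i,j) \<in> MM" using a by simp
      then have "(i',j) \<notin> P" using MMD by blast
      then have "(i',j) \<in> MM" using a by simp
      then show ?thesis using MMD[OF M] MMD[of i' j] by simp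
    qed
  qed
  have c1: False if "(i,j) \<in> P" "(i,j') \<in> MM" for i j j'
  proof -
    have h: "n \<le> j'" "j' < m" "i = j' - n" "A $$ (i, j') \<noteq> 0" using MMD[OF that(2)] by auto
    moreover have "j < i + n" using P0[OF that(1)] by simp
    ultimately have "j < j'" "j' < m" by auto
    then have "A $$ (i,j') = 0" by (rule PB2[OF that(1)])
    then show False using h by simp
  qed
  have pr: "\<forall>i j j'. (i,j) \<in> P \<union> MM \<longrightarrow> (i,j') \<in> P \<union> MM \<longrightarrow> j = j'"
  proof (intro allI impI)
    fix i j j' assume a: "(i,j) \<in> P \<union> MM" "(i,j') \<in> P \<union> MM"
    show "j = j'"
    proof (cases "(i,j) \<in> P")
      case True
      then have "(i,j') \<notin> MM" using c1 by blast
      then have "(i,j') \<in> P" using a by simp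
      then show ?thesis using PR[OF True] by simp
    next
      case False
      then have M: "(i,j) \<in> MM" using a by simp
      then have "(i,j') \<notin> P" using c1 by blast
      then have M2: "(i,j') \<in> MM" using a by simp
      have "n \<le> j" "i = j - n" using MMD[OF M] by auto
      moreover have "n \<le> j'" "i = j' - n" using MMD[OF M2] by auto
      ultimately show ?thesis by linarith
    qed
  qed
  have piv: "\<forall>i j i'. (i,j) \<in> P \<union> MM \<longrightarrow> (i',i) \<notin> P \<union> MM"
  proof (intro allI impI notI)
    fix i j i' assume a: "(i,j) \<in> P \<union> MM" "(i',i) \<in> P \<union> MM"
    show False
    proof (cases "(i',i) \<in> MM")
      case True
      then have "i \<in> JJ" by (rule inJ)
      then show False using Z a(1) by blast
    next
      case False
      then have h: "(i',i) \<in> P" using a by simp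
      show False
      proof (cases "(i,j) \<in> P")
        case True then show False using PIV[OF True] h by blast
      next
        case False
        then have "(i,j) \<in> MM" using a by simp
        then have "j < m" "A $$ (i,j) \<noteq> 0" using MMD by auto
        then show False using PB3[OF h] by simp
      qed
    qed
  qed
  have pb: "\<forall>i j. (i,j) \<in> P \<union> MM \<longrightarrow> A' $$ (i,j) \<noteq> 0 \<and> (\<forall>q. j < q \<and> q < m \<longrightarrow> A' $$ (i,q) = 0) \<and> (\<forall>q<m. A' $$ (j,q) = 0)"
  proof (intro allI impI)
    fix i j assume a: "(i,j) \<in> P \<union> MM"
    show "A' $$ (i,j) \<noteq> 0 \<and> (\<forall>q. j < q \<and> q < m \<longrightarrow> A' $$ (i,q) = 0) \<and> (\<forall>q<m. A' $$ (j,q) = 0)"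
    proof (cases "(i,j) \<in> P")
      case True
      have jm: "j < m" using P0[OF True] by simp
      show ?thesis using A'_Pleft[OF True] A'_Prow[OF True] PB1[OF True] PB2[OF True] jm by simp
    next
      case False
      then have M: "(i,j) \<in> MM" using a by simp
      have h: "j < m" "A $$ (i,j) \<noteq> 0" using MMD[OF M] by auto
      have jJ: "j \<in> JJ" by (rule inJ[OF M])
      show ?thesis using A'_Mrow[OF M] A'_Jrow[OF jJ] h by simp
    qed
  qed
  have pc: "\<forall>i j. i < m \<longrightarrow> j < m \<longrightarrow> j < i + Suc n \<longrightarrow> A' $$ (i,j) \<noteq> 0 \<longrightarrow> (\<exists>i'. i \<le> i' \<and> (i',j) \<in> P \<union> MM)"
  proof (intro allI impI)
    fix i j assume ij: "i < m" "j < m" "j < i + Suc n" "A' $$ (i,j) \<noteq> 0"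
    have nJ: "i \<notin> JJ"
    proof
      assume "i \<in> JJ" then have "A' $$ (i,j) = 0" using A'_Jrow ij(2) by blast
      then show False using ij(4) by simp
    qed
    have "j \<le> i + n" using ij(3) by simp
    then have "A' $$ (i,j) = A $$ (i,j)" using A'_row[OF nJ ij(1,2)] AT_pref[OF ij(1,2)] by simp
    then have Aij: "A $$ (i,j) \<noteq> 0" using ij by simp
    show "\<exists>i'. i \<le> i' \<and> (i',j) \<in> P \<union> MM"
    proof (cases "j < i + n")
      case True
      then obtain i' where "i \<le> i'" "(i',j) \<in> P" using PC[OF ij(1,2) True Aij] by blast
      then show ?thesis by blast
    next
      case False
      then have ji: "j = i + n" using ij by simp
      show ?thesis
      proof (cases "\<exists>i''. (i'',j) \<in> P")
        case True
        then obtain i'' where h: "(i'',j) \<in> P" by blast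
        then have "i \<le> i''" using P0[OF h] ji by simp
        then show ?thesis using h by blast
      next
        case False
        then have "\<forall>i. (i,j) \<notin> P" by blast
        moreover have "n \<le> j" "A $$ (j - n, j) \<noteq> 0" using ji Aij by simp_all
        ultimately have "(j - n, j) \<in> MM" using MMI ij(2) by blast
        moreover have "j - n = i" using ji by simp
        ultimately show ?thesis by blast
      qed
    qed
  qed
  have "A' \<in> carrier_mat m m" by (rule A'_c)
  then show ?thesis unfolding Inv_def
    using comp A'A' p0 pu pr piv pb pc by blast
qed

end



lemma rca_Suc_facts:
  "rca_mat D (Suc r) = (if r = 0 then rca_mat D r else rca_update (dim_row D) r (rca_mat D r) (rca_marked D r))"
  "rca_marked D (Suc r) = rca_markup (dim_row D) (Suc r) (rca_mat D (Suc r)) (rca_pivots D r)"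
  "rca_pivots D (Suc r) = rca_pivots D r \<union> rca_marked D (Suc r)"
proof -
  obtain A P M where e: "rca D r = (A,P,M)" by (cases "rca D r")
  show "rca_mat D (Suc r) = (if r = 0 then rca_mat D r else rca_update (dim_row D) r (rca_mat D r) (rca_marked D r))"
    "rca_marked D (Suc r) = rca_markup (dim_row D) (Suc r) (rca_mat D (Suc r)) (rca_pivots D r)"
    "rca_pivots D (Suc r) = rca_pivots D r \<union> rca_marked D (Suc r)"
    using e by (cases r; simp add: rca_mat_def rca_pivots_def rca_marked_def Let_def)+
qed

lemma rca_zero: "rca_mat D 0 = D" "rca_pivots D 0 = {}" "rca_marked D 0 = {}"
  by (simp_all add: rca_mat_def rca_pivots_def rca_marked_def)

lemma pivots_mono: "a \<le> c \<Longrightarrow> rca_pivots D a \<subseteq> rca_pivots D c"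
proof (induction c)
  case 0 then show ?case by simp
next
  case (Suc c)
  then show ?case
  proof (cases "a = Suc c")
    case False
    then have "rca_pivots D a \<subseteq> rca_pivots D c" using Suc by simp
    then show ?thesis using rca_Suc_facts(3)[of D c] by auto
  qed simp
qed

lemma marked_sub: "rca_marked D r \<subseteq> rca_pivots D r"
proof (cases r)
  case 0 then show ?thesis by (simp add: rca_zero)
next
  case (Suc k) then show ?thesis using rca_Suc_facts(3)[of D k] by auto
qed

lemma Inv_all:
  assumes cm: "connection_matrix m b blk (D :: 'a::field mat)" and n: "1 \<le> n"
  shows "Inv m b blk n (rca_mat D n) (rca_pivots D (n - 1))"
  using n
proof (induction n rule: dec_induct)
  case base
  have Dc: "D \<in> carrier_mat m m" and comp: "compliant b blk D" and DD: "D * D = 0\<^sub>m m m"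
    using cm unfolding connection_matrix_def by auto
  have m1: "rca_mat D 1 = D" using rca_Suc_facts(1)[of D 0] by (simp add: rca_zero)
  have pc: "\<forall>i j. i < m \<longrightarrow> j < m \<longrightarrow> j < i + 1 \<longrightarrow> D $$ (i,j) \<noteq> 0 \<longrightarrow> (\<exists>i'. i \<le> i' \<and> (i',j) \<in> ({} :: (nat \<times> nat) set))"
  proof (intro allI impI)
    fix i j assume "i < m" "j < m" "j < i + 1" "D $$ (i,j) \<noteq> 0"
    then have "allowable b blk i j" using comp Dc unfolding compliant_def by auto
    then show "\<exists>i'. i \<le> i' \<and> (i',j) \<in> ({} :: (nat \<times> nat) set)" using \<open>j < i + 1\<close> unfolding allowable_def by simp
  qed
  show ?case unfolding m1 Inv_def using Dc comp DD pc by (simp add: rca_zero)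
next
  case (step n)
  have dr: "dim_row D = m" using cm unfolding connection_matrix_def by auto
  obtain k where k: "n = Suc k" using step(1) by (cases n) auto
  have e1: "rca_mat D (Suc n) = rca_update m n (rca_mat D n) (rca_markup m n (rca_mat D n) (rca_pivots D (n - 1)))"
    using rca_Suc_facts(1)[of D n] rca_Suc_facts(2)[of D k] dr k by simp
  have e2: "rca_pivots D (Suc n - 1) = rca_pivots D (n - 1) \<union> rca_markup m n (rca_mat D n) (rca_pivots D (n - 1))"
    using rca_Suc_facts(3)[of D k] rca_Suc_facts(2)[of D k] dr k by simp
  show ?case unfolding e1 e2 by (rule Submission.step[OF step(3) step(1)])
qed


lemma marked_form: "(i,j) \<in> rca_marked D r \<Longrightarrow> 1 \<le> r \<Longrightarrow> rca_mat D r $$ (i,j) \<noteq> 0"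
proof -
  assume a: "(i,j) \<in> rca_marked D r" and r: "1 \<le> r"
  obtain k where k: "r = Suc k" using r by (cases r) auto
  have "(i,j) \<in> rca_markup (dim_row D) r (rca_mat D r) (rca_pivots D k)"
    using a rca_Suc_facts(2)[of D k] k by simp
  then show ?thesis unfolding rca_markup_def by auto
qed

lemma pivots_split: "1 \<le> r \<Longrightarrow> rca_pivots D r = rca_pivots D (r - 1) \<union> rca_marked D r"
  using rca_Suc_facts(3)[of D "r - 1"] by simp

theorem mainTheorem11:
  fixes D :: "'a::field mat" and m b :: nat and blk :: "nat \<Rightarrow> nat"
  assumes "m \<ge> 1"
    and "connection_matrix m b blk D"
  shows
    "(\<forall>r < m. compliant b blk (rca_mat D r))
   \<and> (\<forall>r. 1 \<le> r \<and> r \<le> m - 1 \<longrightarrow>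
        (\<forall>(i,j) \<in> rca_pivots D r. rca_mat D r $$ (i,j) \<noteq> 0)
      \<and> (\<forall>i < m. \<forall>j < m. j < i + r \<and> rca_mat D r $$ (i,j) \<noteq> 0 \<longrightarrow>
            (i,j) \<in> rca_pivots D r
          \<or> (\<exists>i'. i' > i \<and> (i',j) \<in> rca_pivots D r \<and>
                 (\<forall>i''. (i'',j) \<in> rca_pivots D r \<longrightarrow> i'' = i'))))
   \<and> (\<forall>r p. 1 \<le> r \<and> r \<le> m - 2 \<and> (p - r, p) \<in> rca_marked D r \<longrightarrow>
        (\<forall>s. r + 1 \<le> s \<and> s \<le> m - 1 \<longrightarrow>
           (\<forall>q. p < q \<and> q < m \<longrightarrow> rca_mat D s $$ (p - r, q) = 0)
         \<and> (\<forall>q < m. rca_mat D s $$ (p, q) = 0)))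
   \<and> (\<forall>i j. (i,j) \<in> rca_pivots D (m - 1) \<longrightarrow> (\<nexists>i'. (i', i) \<in> rca_pivots D (m - 1)))
   \<and> (\<forall>i j j'. (i,j) \<in> rca_pivots D (m - 1) \<and> (i,j') \<in> rca_pivots D (m - 1) \<longrightarrow> j = j')"
proof -
  note cm = assms(2)
  have I: "Inv m b blk n (rca_mat D n) (rca_pivots D (n - 1))" if "1 \<le> n" for n
    by (rule Inv_all[OF cm that])
  have p1: "\<forall>r < m. compliant b blk (rca_mat D r)"
  proof (intro allI impI)
    fix r assume "r < m"
    show "compliant b blk (rca_mat D r)"
    proof (cases "r = 0")
      case True then show ?thesis using cm by (simp add: rca_zero connection_matrix_def)
    next
      case False then show ?thesis using I[of r] by (simp add: Inv_def)
    qed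
  qed
  have p2: "\<forall>r. 1 \<le> r \<and> r \<le> m - 1 \<longrightarrow>
        (\<forall>(i,j) \<in> rca_pivots D r. rca_mat D r $$ (i,j) \<noteq> 0)
      \<and> (\<forall>i < m. \<forall>j < m. j < i + r \<and> rca_mat D r $$ (i,j) \<noteq> 0 \<longrightarrow>
            (i,j) \<in> rca_pivots D r
          \<or> (\<exists>i'. i' > i \<and> (i',j) \<in> rca_pivots D r \<and>
                 (\<forall>i''. (i'',j) \<in> rca_pivots D r \<longrightarrow> i'' = i')))"
  proof (rule allI, rule impI, rule conjI)
    fix r assume r: "1 \<le> r \<and> r \<le> m - 1"
    have Ir: "Inv m b blk r (rca_mat D r) (rca_pivots D (r - 1))" using I r by simp
    have Ir1: "Inv m b blk (Suc r) (rca_mat D (Suc r)) (rca_pivots D r)" using I[of "Suc r"] by simp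
    have sp: "rca_pivots D r = rca_pivots D (r - 1) \<union> rca_marked D r" by (rule pivots_split) (use r in simp)
    show "\<forall>(i,j) \<in> rca_pivots D r. rca_mat D r $$ (i,j) \<noteq> 0"
    proof (intro ballI, clarify)
      fix i j assume a: "(i,j) \<in> rca_pivots D r" and z: "rca_mat D r $$ (i,j) = 0"
      show False
      proof (cases "(i,j) \<in> rca_pivots D (r - 1)")
        case True then show False using Ir z unfolding Inv_def by blast
      next
        case False then have "(i,j) \<in> rca_marked D r" using a sp by simp
        then show False using marked_form r z by blast
      qed
    qed
    show "\<forall>i < m. \<forall>j < m. j < i + r \<and> rca_mat D r $$ (i,j) \<noteq> 0 \<longrightarrow>
            (i,j) \<in> rca_pivots D r
          \<or> (\<exists>i'. i' > i \<and> (i',j) \<in> rca_pivots D r \<and>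
                 (\<forall>i''. (i'',j) \<in> rca_pivots D r \<longrightarrow> i'' = i'))"
    proof (intro allI impI)
      fix i j assume ij: "i < m" "j < m" "j < i + r \<and> rca_mat D r $$ (i,j) \<noteq> 0"
      then obtain i' where i': "i \<le> i'" "(i',j) \<in> rca_pivots D (r - 1)"
        using Ir unfolding Inv_def by blast
      have i'P: "(i',j) \<in> rca_pivots D r" using i'(2) sp by simp
      have uniq: "\<forall>i''. (i'',j) \<in> rca_pivots D r \<longrightarrow> i'' = i'"
        using Ir1 i'P unfolding Inv_def by blast
      show "(i,j) \<in> rca_pivots D r
          \<or> (\<exists>i'. i' > i \<and> (i',j) \<in> rca_pivots D r \<and>
                 (\<forall>i''. (i'',j) \<in> rca_pivots D r \<longrightarrow> i'' = i'))"
      proof (cases "i = i'")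
        case True then show ?thesis using i'P by simp
      next
        case False then have "i < i'" using i' by simp
        then show ?thesis using i'P uniq by blast
      qed
    qed
  qed
  have p3: "\<forall>r p. 1 \<le> r \<and> r \<le> m - 2 \<and> (p - r, p) \<in> rca_marked D r \<longrightarrow>
        (\<forall>s. r + 1 \<le> s \<and> s \<le> m - 1 \<longrightarrow>
           (\<forall>q. p < q \<and> q < m \<longrightarrow> rca_mat D s $$ (p - r, q) = 0)
         \<and> (\<forall>q < m. rca_mat D s $$ (p, q) = 0))"
  proof (intro allI impI)
    fix r p s assume a: "1 \<le> r \<and> r \<le> m - 2 \<and> (p - r, p) \<in> rca_marked D r" and s: "r + 1 \<le> s \<and> s \<le> m - 1"
    have Is: "Inv m b blk s (rca_mat D s) (rca_pivots D (s - 1))" using I s by simp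
    have "(p - r, p) \<in> rca_pivots D r" using a marked_sub by blast
    moreover have "rca_pivots D r \<subseteq> rca_pivots D (s - 1)" by (rule pivots_mono) (use s in arith)
    ultimately have h: "(p - r, p) \<in> rca_pivots D (s - 1)" by blast
    show "(\<forall>q. p < q \<and> q < m \<longrightarrow> rca_mat D s $$ (p - r, q) = 0) \<and> (\<forall>q < m. rca_mat D s $$ (p, q) = 0)"
      using Is h unfolding Inv_def by blast
  qed
  have Im: "Inv m b blk m (rca_mat D m) (rca_pivots D (m - 1))" using I assms(1) by simp
  have p4: "\<forall>i j. (i,j) \<in> rca_pivots D (m - 1) \<longrightarrow> (\<nexists>i'. (i', i) \<in> rca_pivots D (m - 1))"
    using Im unfolding Inv_def by blast
  have p5: "\<forall>i j j'. (i,j) \<in> rca_pivots D (m - 1) \<and> (i,j') \<in> rca_pivots D (m - 1) \<longrightarrow> j = j'"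
    using Im unfolding Inv_def by blast
  show ?thesis using p1 p2 p3 p4 p5 by blast
qed


end
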